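(* Let $S$ be a finite pseudo-nilpotent semigroup with a fixed principal series $S=S_1\supset\cdots\supset S_m\supset S_{m+1}=\emptyset$, and let $a,b\in S$. If there is an edge in $\mathcal{N}_S$ between $a$ and $b$, then there exists a stem $S^{(i)}$ with $a,b\in S^{(i)}$.
   Context: For a semigroup $S$, $S^1$ denotes $S$ with an identity adjoined (if $S$ has none). For $x,y\in S$, $z_1,z_2,\ldots\in S^1$ define $\lambda_0=x$, $\rho_0=y$, $\lambda_{n+1}=\lambda_n z_{n+1}\rho_n$, $\rho_{n+1}=\rho_n z_{n+1}\lambda_n$; write $\lambda_n(x,y,z_1,\ldots,z_n)$, $\rho_n(x,y,z_1,\ldots,z_n)$. $S$ is nilpotent (Mal'cev) if for some $n\ge1$, $\lambda_n(a,b,c_1,\ldots,c_n)=\rho_n(a,b,c_1,\ldots,c_n)$ for all $a,b\in S$, $c_i\in S^1$. $\langle X\rangle$ is the subsemigroup generated by $X$. The upper non-nilpotent graph $\mathcal{N}_S$ has vertex set $S$ and an edge between $x,y$ iff $\langle x,y\rangle$ is not nilpotent. The empty set counts as an ideal; $S/I$ is the Rees factor, $S/\emptyset=S$. $S$ is pseudo-nilpotent if: whenever $x,y\in S$, $w_1,\ldots,w_m\in S^1$, $T$ is the subsemigroup generated by $x,y$ and the $w_i$ lying in $S$, $I$ is a (possibly empty) ideal of $T$, and $t<m$ are non-negative integers with (writing $\lambda_k=\lambda_k(x,y,w_1,\ldots,w_k)$, $\rho_k$ likewise) $\lambda_t\neq\rho_t$, $(\lambda_t,\rho_t)=(\lambda_m,\rho_m)$,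 $\lambda_m,\rho_m\notin I$, then for all $0\le i\le m$ there is an edge in $\mathcal{N}_{T/I}$ between (the images of) $\lambda_i$ and $\rho_i$. A principal series means each $S_i$ is an ideal of $S$ and no ideal lies strictly between $S_{i+1}$ and $S_i$; principal factors are $S_i/S_{i+1}$. For $1\le j\le m$ put $F^{(j)}=\{s\in S\setminus S_j: st\notin S_{j+1}\text{ or }ts\notin S_{j+1}\text{ for some }t\in S_j\setminus S_{j+1}\}$ and $S^{(j)}=F^{(j)}\cup(S_j\setminus S_{j+1})$. $S_i\setminus S_{i+1}$ is a root if $S_i/S_{i+1}$ is not nilpotent and $\langle a,b\rangle$ is nilpotent for all $a\in S_i\setminus S_{i+1}$, $b\in S_{i+1}$; in that case $S^{(i)}$ is called a stem. *)

theory Defs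
  imports Main
begin

text \<open>Semigroups are given by a carrier set and a binary operation.
  Elements of S^1 are encoded as options: None is the adjoined identity,
  Some s is s.\<close>

definition semigroup_on :: "'a set \<Rightarrow> ('a \<Rightarrow> 'a \<Rightarrow> 'a) \<Rightarrow> bool" where
  "semigroup_on S f \<longleftrightarrow> (\<forall>x\<in>S. \<forall>y\<in>S. f x y \<in> S) \<and>
     (\<forall>x\<in>S. \<forall>y\<in>S. \<forall>z\<in>S. f (f x y) z = f x (f y z))"

definition one_adj :: "'a set \<Rightarrow> 'a option set" where
  "one_adj U = Some ` U \<union> {None}"

definition mul3 :: "('a \<Rightarrow> 'a \<Rightarrow> 'a) \<Rightarrow> 'a \<Rightarrow> 'a option \<Rightarrow> 'a \<Rightarrow> 'a" where
  "mul3 f u z v = (case z of None \<Rightarrow> f u v | Some w \<Rightarrow> f (f u w) v)"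

fun lr :: "('a \<Rightarrow> 'a \<Rightarrow> 'a) \<Rightarrow> 'a \<Rightarrow> 'a \<Rightarrow> (nat \<Rightarrow> 'a option) \<Rightarrow> nat \<Rightarrow> 'a \<times> 'a" where
  "lr f x y z 0 = (x, y)"
| "lr f x y z (Suc n) =
     (let (l, r) = lr f x y z n in (mul3 f l (z (Suc n)) r, mul3 f r (z (Suc n)) l))"

definition lam :: "('a \<Rightarrow> 'a \<Rightarrow> 'a) \<Rightarrow> 'a \<Rightarrow> 'a \<Rightarrow> (nat \<Rightarrow> 'a option) \<Rightarrow> nat \<Rightarrow> 'a" where
  "lam f x y z n = fst (lr f x y z n)"

definition rho :: "('a \<Rightarrow> 'a \<Rightarrow> 'a) \<Rightarrow> 'a \<Rightarrow> 'a \<Rightarrow> (nat \<Rightarrow> 'a option) \<Rightarrow> nat \<Rightarrow> 'a" where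
  "rho f x y z n = snd (lr f x y z n)"

definition nilpotent_sg :: "('a \<Rightarrow> 'a \<Rightarrow> 'a) \<Rightarrow> 'a set \<Rightarrow> bool" where
  "nilpotent_sg f U \<longleftrightarrow> (\<exists>n\<ge>1. \<forall>a\<in>U. \<forall>b\<in>U. \<forall>c.
      (\<forall>i\<in>{1..n}. c i \<in> one_adj U) \<longrightarrow> lam f a b c n = rho f a b c n)"

inductive_set gen :: "('a \<Rightarrow> 'a \<Rightarrow> 'a) \<Rightarrow> 'a set \<Rightarrow> 'a set" for f X where
  base: "x \<in> X \<Longrightarrow> x \<in> gen f X"
| mult: "a \<in> gen f X \<Longrightarrow> b \<in> gen f X \<Longrightarrow> f a b \<in> gen f X"

definition nn_edge :: "('a \<Rightarrow> 'a \<Rightarrow> 'a) \<Rightarrow> 'a set \<Rightarrow> 'a \<Rightarrow> 'a \<Rightarrow> bool" where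
  "nn_edge f U x y \<longleftrightarrow> x \<in> U \<and> y \<in> U \<and> \<not> nilpotent_sg f (gen f {x, y})"

definition ideal_of :: "('a \<Rightarrow> 'a \<Rightarrow> 'a) \<Rightarrow> 'a set \<Rightarrow> 'a set \<Rightarrow> bool" where
  "ideal_of f T I \<longleftrightarrow> I \<subseteq> T \<and> (\<forall>x\<in>I. \<forall>t\<in>T. f x t \<in> I \<and> f t x \<in> I)"

text \<open>Rees factor T/I: element x of T is represented by Some x if x \<notin> I,
  and the zero (the class I, present only if I is nonempty) by None.\<close>
definition rees_img :: "'a set \<Rightarrow> 'a \<Rightarrow> 'a option" where
  "rees_img I x = (if x \<in> I then None else Some x)"

definition rees_carrier :: "'a set \<Rightarrow> 'a set \<Rightarrow> 'a option set" where
  "rees_carrier T I = rees_img I ` T"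

fun rees_mult :: "('a \<Rightarrow> 'a \<Rightarrow> 'a) \<Rightarrow> 'a set \<Rightarrow> 'a option \<Rightarrow> 'a option \<Rightarrow> 'a option" where
  "rees_mult f I (Some x) (Some y) = rees_img I (f x y)"
| "rees_mult f I _ _ = None"

definition pseudo_nilpotent :: "('a \<Rightarrow> 'a \<Rightarrow> 'a) \<Rightarrow> 'a set \<Rightarrow> bool" where
  "pseudo_nilpotent f S \<longleftrightarrow>
    (\<forall>x\<in>S. \<forall>y\<in>S. \<forall>m::nat. \<forall>w. \<forall>T I. \<forall>t::nat.
       (\<forall>i\<in>{1..m}. w i \<in> one_adj S) \<longrightarrow>
       T = gen f ({x, y} \<union> {s. \<exists>i\<in>{1..m}. w i = Some s}) \<longrightarrow>
       ideal_of f T I \<longrightarrow> t < m \<longrightarrow>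
       lam f x y w t \<noteq> rho f x y w t \<longrightarrow>
       lam f x y w t = lam f x y w m \<longrightarrow> rho f x y w t = rho f x y w m \<longrightarrow>
       lam f x y w m \<notin> I \<longrightarrow> rho f x y w m \<notin> I \<longrightarrow>
       (\<forall>i\<le>m. nn_edge (rees_mult f I) (rees_carrier T I)
                 (rees_img I (lam f x y w i)) (rees_img I (rho f x y w i))))"

definition principal_series ::
  "('a \<Rightarrow> 'a \<Rightarrow> 'a) \<Rightarrow> 'a set \<Rightarrow> (nat \<Rightarrow> 'a set) \<Rightarrow> nat \<Rightarrow> bool" where
  "principal_series f S Ser m \<longleftrightarrow> m \<ge> 1 \<and> Ser 1 = S \<and> Ser (m + 1) = {} \<and>
     (\<forall>i\<in>{1..m+1}. ideal_of f S (Ser i)) \<and>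
     (\<forall>i\<in>{1..m}. Ser (i + 1) \<subset> Ser i \<and>
        \<not> (\<exists>J. ideal_of f S J \<and> Ser (i + 1) \<subset> J \<and> J \<subset> Ser i))"

definition F_set :: "('a \<Rightarrow> 'a \<Rightarrow> 'a) \<Rightarrow> 'a set \<Rightarrow> (nat \<Rightarrow> 'a set) \<Rightarrow> nat \<Rightarrow> 'a set" where
  "F_set f S Ser j = {s \<in> S - Ser j. \<exists>t \<in> Ser j - Ser (j + 1).
       f s t \<notin> Ser (j + 1) \<or> f t s \<notin> Ser (j + 1)}"

definition stem_set :: "('a \<Rightarrow> 'a \<Rightarrow> 'a) \<Rightarrow> 'a set \<Rightarrow> (nat \<Rightarrow> 'a set) \<Rightarrow> nat \<Rightarrow> 'a set" where
  "stem_set f S Ser j = F_set f S Ser j \<union> (Ser j - Ser (j + 1))"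

definition is_root :: "('a \<Rightarrow> 'a \<Rightarrow> 'a) \<Rightarrow> (nat \<Rightarrow> 'a set) \<Rightarrow> nat \<Rightarrow> bool" where
  "is_root f Ser i \<longleftrightarrow>
     \<not> nilpotent_sg (rees_mult f (Ser (i + 1))) (rees_carrier (Ser i) (Ser (i + 1))) \<and>
     (\<forall>a \<in> Ser i - Ser (i + 1). \<forall>b \<in> Ser (i + 1). nilpotent_sg f (gen f {a, b}))"

end

theory Submission imports Defs begin
lemma lr_Suc': "lr f x y z (Suc n) = (mul3 f (lam f x y z n) (z (Suc n)) (rho f x y z n),
   mul3 f (rho f x y z n) (z (Suc n)) (lam f x y z n))"
  by (simp add: lam_def rho_def split: prod.split)

lemma lam_Suc: "lam f x y z (Suc n) = mul3 f (lam f x y z n) (z (Suc n)) (rho f x y z n)"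
  by (simp add: lam_def lr_Suc' del: lr.simps)

lemma rho_Suc: "rho f x y z (Suc n) = mul3 f (rho f x y z n) (z (Suc n)) (lam f x y z n)"
  by (simp add: rho_def lr_Suc' del: lr.simps)

lemma lam_0[simp]: "lam f x y z 0 = x" by (simp add: lam_def)
lemma rho_0[simp]: "rho f x y z 0 = y" by (simp add: rho_def)

lemma lr_eq: "lr f x y z n = (lam f x y z n, rho f x y z n)"
  by (simp add: lam_def rho_def)

lemma lr_swap: "lam f y x z n = rho f x y z n \<and> rho f y x z n = lam f x y z n"
  by (induction n) (simp_all add: lam_Suc rho_Suc)

lemma lr_shift: "lam f x y z (j + n) = lam f (lam f x y z j) (rho f x y z j) (\<lambda>i. z (j + i)) n
  \<and> rho f x y z (j + n) = rho f (lam f x y z j) (rho f x y z j) (\<lambda>i. z (j + i)) n"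
  by (induction n) (simp_all add: lam_Suc rho_Suc)

lemma eq_prop: "lam f x y z n = rho f x y z n \<Longrightarrow> lam f x y z (n + k) = rho f x y z (n + k)"
  by (induction k) (simp_all add: lam_Suc rho_Suc)

lemma eq_prop': "lam f x y z n = rho f x y z n \<Longrightarrow> n \<le> k \<Longrightarrow> lam f x y z k = rho f x y z k"
  using eq_prop[of f x y z n "k - n"] by simp

lemma mul3_closed: "(\<forall>u\<in>U. \<forall>v\<in>U. f u v \<in> U) \<Longrightarrow> u \<in> U \<Longrightarrow> v \<in> U \<Longrightarrow> z \<in> one_adj U
  \<Longrightarrow> mul3 f u z v \<in> U"
  by (auto simp: mul3_def one_adj_def)

lemma lr_closed:
  assumes "\<forall>u\<in>U. \<forall>v\<in>U. f u v \<in> U" "x \<in> U" "y \<in> U"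
    "\<forall>l. 1 \<le> l \<and> l \<le> n \<longrightarrow> z l \<in> one_adj U"
  shows "lam f x y z n \<in> U \<and> rho f x y z n \<in> U"
  using assms(4)
proof (induction n)
  case 0 then show ?case using assms by simp
next
  case (Suc n)
  then have "lam f x y z n \<in> U \<and> rho f x y z n \<in> U" by auto
  moreover have "z (Suc n) \<in> one_adj U" using Suc.prems by auto
  ultimately show ?case by (simp add: lam_Suc rho_Suc mul3_closed assms(1))
qed

locale sgp =
  fixes S :: "'a set" and f :: "'a \<Rightarrow> 'a \<Rightarrow> 'a"
  assumes sg: "semigroup_on S f"
begin

lemma cl: "x \<in> S \<Longrightarrow> y \<in> S \<Longrightarrow> f x y \<in> S"
  using sg by (auto simp: semigroup_on_def)

lemma assoc: "x \<in> S \<Longrightarrow> y \<in> S \<Longrightarrow> z \<in> S \<Longrightarrow> f (f x y) z = f x (f y z)"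
  using sg by (auto simp: semigroup_on_def)

definition J :: "'a \<Rightarrow> 'a set" where
  "J a = {a} \<union> (\<lambda>s. f s a) ` S \<union> (\<lambda>s. f a s) ` S \<union> {f (f s a) t |s t. s \<in> S \<and> t \<in> S}"

lemma J_self: "a \<in> J a" by (simp add: J_def)

lemma J_sub: "a \<in> S \<Longrightarrow> J a \<subseteq> S"
  by (auto simp: J_def cl)

lemma J_cases: "x \<in> J a \<Longrightarrow> (x = a \<Longrightarrow> P) \<Longrightarrow> (\<And>s. s \<in> S \<Longrightarrow> x = f s a \<Longrightarrow> P)
  \<Longrightarrow> (\<And>s. s \<in> S \<Longrightarrow> x = f a s \<Longrightarrow> P) \<Longrightarrow> (\<And>s u. s \<in> S \<Longrightarrow> u \<in> S \<Longrightarrow> x = f (f s a) u \<Longrightarrow> P) \<Longrightarrow> P"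
  unfolding J_def by blast

lemma J_I1: "s \<in> S \<Longrightarrow> f s a \<in> J a" unfolding J_def by blast
lemma J_I2: "s \<in> S \<Longrightarrow> f a s \<in> J a" unfolding J_def by blast
lemma J_I3: "s \<in> S \<Longrightarrow> u \<in> S \<Longrightarrow> f (f s a) u \<in> J a" unfolding J_def by blast

lemma J_ideal: assumes a: "a \<in> S" shows "ideal_of f S (J a)"
  unfolding ideal_of_def
proof (intro conjI ballI)
  show "J a \<subseteq> S" using J_sub assms .
next
  fix x t assume x: "x \<in> J a" and t: "t \<in> S"
  show "f x t \<in> J a"
  proof (rule J_cases[OF x])
    assume "x = a" then show ?thesis using J_I2[OF t] by simp
  next
    fix s assume "s \<in> S" "x = f s a" then show ?thesis using J_I3[where s=s and u=t and a=a] t by simp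
  next
    fix s assume s: "s \<in> S" "x = f a s" then show ?thesis using J_I2[where s="f s t" and a=a] t a
      by (simp add: assoc cl)
  next
    fix s u assume s: "s \<in> S" "u \<in> S" "x = f (f s a) u"
    then show ?thesis using J_I3[where s=s and u="f u t" and a=a] t a by (simp add: assoc cl)
  qed
  show "f t x \<in> J a"
  proof (rule J_cases[OF x])
    assume "x = a" then show ?thesis using J_I1[OF t] by simp
  next
    fix s assume s: "s \<in> S" "x = f s a" then show ?thesis using J_I1[where s="f t s" and a=a] t a
      by (simp add: assoc cl)
  next
    fix s assume s: "s \<in> S" "x = f a s" then show ?thesis using J_I3[where s=t and u=s and a=a] t a
      by (simp add: assoc cl)
  next
    fix s u assume s: "s \<in> S" "u \<in> S" "x = f (f s a) u"
    then show ?thesis using J_I3[where s="f t s" and u=u and a=a] t a by (simp add: assoc cl)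
  qed
qed

lemma J_min: assumes "ideal_of f S I" "a \<in> I" shows "J a \<subseteq> I"
  using assms by (auto simp: J_def ideal_of_def)

lemma ideal_sub: "ideal_of f S I \<Longrightarrow> I \<subseteq> S" by (simp add: ideal_of_def)
lemma ideal_r: "ideal_of f S I \<Longrightarrow> x \<in> I \<Longrightarrow> t \<in> S \<Longrightarrow> f x t \<in> I" by (simp add: ideal_of_def)
lemma ideal_l: "ideal_of f S I \<Longrightarrow> x \<in> I \<Longrightarrow> t \<in> S \<Longrightarrow> f t x \<in> I" by (simp add: ideal_of_def)

lemma mul3_ideal:
  assumes I: "ideal_of f S I" and "u \<in> S" "v \<in> S" "z \<in> one_adj S"
    and h: "u \<in> I \<or> v \<in> I \<or> z \<in> Some ` I"
  shows "mul3 f u z v \<in> I"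
proof (cases z)
  case None then show ?thesis using h assms ideal_r ideal_l by (auto simp: mul3_def)
next
  case (Some w)
  then have w: "w \<in> S" using assms by (auto simp: one_adj_def)
  show ?thesis using h assms ideal_r ideal_l Some w cl ideal_sub[OF I]
    by (auto simp: mul3_def)
qed

lemma S_closed: "\<forall>u\<in>S. \<forall>v\<in>S. f u v \<in> S" using cl by blast

lemma lr_S: "x \<in> S \<Longrightarrow> y \<in> S \<Longrightarrow> \<forall>l. 1 \<le> l \<and> l \<le> n \<longrightarrow> z l \<in> one_adj S
  \<Longrightarrow> lam f x y z n \<in> S \<and> rho f x y z n \<in> S"
  using lr_closed[OF S_closed] by blast

lemma in_ideal_step:
  assumes I: "ideal_of f S I" and xy: "x \<in> S" "y \<in> S"
    and z: "\<forall>l. 1 \<le> l \<and> l \<le> n \<longrightarrow> z l \<in> one_adj S"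
    and jn: "j < n"
    and h: "lam f x y z j \<in> I \<or> rho f x y z j \<in> I \<or> z (Suc j) \<in> Some ` I"
  shows "lam f x y z n \<in> I \<and> rho f x y z n \<in> I"
  using z jn
proof (induction n)
  case 0 then show ?case by simp
next
  case (Suc n)
  have S1: "lam f x y z n \<in> S \<and> rho f x y z n \<in> S" using lr_S[OF xy, of n z] Suc.prems by auto
  have zS: "z (Suc n) \<in> one_adj S" using Suc.prems by auto
  show ?case
  proof (cases "j = n")
    case True
    then show ?thesis using h S1 zS by (auto simp: lam_Suc rho_Suc intro!: mul3_ideal[OF I])
  next
    case False
    then have "lam f x y z n \<in> I \<and> rho f x y z n \<in> I" using Suc by auto
    then show ?thesis using S1 zS by (auto simp: lam_Suc rho_Suc intro!: mul3_ideal[OF I])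
  qed
qed

lemma rep:
  assumes I: "ideal_of f S I" and xy: "x \<in> S" "y \<in> S" and yI: "y \<in> I"
    and z: "\<forall>l. 1 \<le> l \<and> l \<le> n \<longrightarrow> z l \<in> one_adj S"
    and n: "1 \<le> n"
  shows "\<exists>u\<in>I. lam f x y z n = f x u"
  using z n
proof (induction n)
  case 0 then show ?case by simp
next
  case (Suc n)
  have S1: "lam f x y z n \<in> S \<and> rho f x y z n \<in> S" using lr_S[OF xy, of n z] Suc.prems by auto
  have zS: "z (Suc n) \<in> one_adj S" using Suc.prems by auto
  show ?case
  proof (cases "n = 0")
    case True
    then show ?thesis
    proof (cases "z (Suc n)")
      case None then show ?thesis using True yI by (auto simp: lam_Suc mul3_def)
    next
      case (Some w)
      then have w: "w \<in> S" using zS by (auto simp: one_adj_def)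
      show ?thesis using True Some yI w xy I
        by (auto simp: lam_Suc mul3_def assoc intro!: bexI[of _ "f w y"] ideal_l)
    qed
  next
    case False
    then obtain u where u: "u \<in> I" "lam f x y z n = f x u" using Suc by auto
    have uS: "u \<in> S" using u ideal_sub[OF I] by auto
    let ?r = "rho f x y z n"
    show ?thesis
    proof (cases "z (Suc n)")
      case None then show ?thesis using u uS S1 xy
        by (auto simp: lam_Suc mul3_def assoc intro!: bexI[of _ "f u ?r"] ideal_r[OF I])
    next
      case (Some w)
      then have w: "w \<in> S" using zS by (auto simp: one_adj_def)
      show ?thesis using u uS S1 xy Some w
        by (auto simp: lam_Suc mul3_def assoc cl intro!: bexI[of _ "f u (f w ?r)"] ideal_r[OF I])
    qed
  qed
qed

definition cyc :: "'a \<Rightarrow> 'a \<Rightarrow> (nat \<Rightarrow> 'a option) \<Rightarrow> nat \<Rightarrow> bool" where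
  "cyc x y z p \<longleftrightarrow> x \<in> S \<and> y \<in> S \<and> (\<forall>l. 1 \<le> l \<and> l \<le> p \<longrightarrow> z l \<in> one_adj S) \<and> 1 \<le> p \<and>
     x \<noteq> y \<and> lam f x y z p = x \<and> rho f x y z p = y"

lemma cyc_swap: "cyc x y z p \<Longrightarrow> cyc y x z p"
  using lr_swap[of f y x z p] unfolding cyc_def by metis

lemma cyc_rep: assumes "cyc x y z p" "ideal_of f S I" "y \<in> I" shows "\<exists>u\<in>I. x = f x u"
  using rep[OF assms(2), where x=x and y=y and z=z and n=p] assms by (auto simp: cyc_def)

lemma cyc_ideal:
  assumes c: "cyc x y z p" and I: "ideal_of f S I"
    and h: "x \<in> I \<or> y \<in> I \<or> (\<exists>l. 1 \<le> l \<and> l \<le> p \<and> z l \<in> Some ` I)"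
  shows "x \<in> I \<and> y \<in> I"
proof -
  have cc: "x \<in> S" "y \<in> S" "\<forall>l. 1 \<le> l \<and> l \<le> p \<longrightarrow> z l \<in> one_adj S" "1 \<le> p"
    "lam f x y z p = x" "rho f x y z p = y" using c by (auto simp: cyc_def)
  from h consider "x \<in> I \<or> y \<in> I" | l where "1 \<le> l" "l \<le> p" "z l \<in> Some ` I" by blast
  then show ?thesis
  proof cases
    case 1
    then show ?thesis using in_ideal_step[OF I cc(1,2,3), of 0] cc by auto
  next
    case 2
    then show ?thesis using in_ideal_step[OF I cc(1,2,3), of "l - 1"] cc by auto
  qed
qed

lemma gen_sub: assumes "X \<subseteq> S" shows "gen f X \<subseteq> S"
proof
  fix v assume "v \<in> gen f X" then show "v \<in> S"
    by (induction rule: gen.induct) (use assms in \<open>auto simp: cl\<close>)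
qed

lemma comm_gen:
  assumes "u \<in> S" "X \<subseteq> S" "\<forall>x\<in>X. f u x = f x u" "v \<in> gen f X"
  shows "f u v = f v u"
  using assms(4)
proof (induction rule: gen.induct)
  case (base x) then show ?case using assms by auto
next
  case (mult v1 v2)
  have s: "v1 \<in> S" "v2 \<in> S" using mult gen_sub assms by auto
  have "f u (f v1 v2) = f (f u v1) v2" using assoc s assms by simp
  also have "\<dots> = f (f v1 u) v2" using mult.IH(1) by simp
  also have "\<dots> = f v1 (f u v2)" using assoc s assms by simp
  also have "\<dots> = f v1 (f v2 u)" using mult.IH(2) by simp
  also have "\<dots> = f (f v1 v2) u" using assoc s assms by simp
  finally show ?case .
qed

lemma gen1_comm: assumes b: "b \<in> S" and u: "u \<in> gen f {b}" and v: "v \<in> gen f {b}"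
  shows "f u v = f v u"
proof -
  have bS: "{b} \<subseteq> S" using b by simp
  have uS: "u \<in> S" using gen_sub[OF bS] u by blast
  have "f b u = f u b" by (rule comm_gen[OF b bS _ u]) simp
  then have "\<forall>x\<in>{b}. f u x = f x u" by simp
  then show ?thesis by (rule comm_gen[OF uS bS _ v])
qed

lemma gen_split: assumes "a \<in> S" "b \<in> S" shows "gen f {a, b} \<subseteq> gen f {b} \<union> J a"
proof
  fix v assume "v \<in> gen f {a, b}" then show "v \<in> gen f {b} \<union> J a"
  proof (induction rule: gen.induct)
    case (base x)
    then consider "x = a" | "x = b" by blast
    then show ?case
    proof cases
      case 1 then show ?thesis using J_self by simp
    next
      case 2 then have "x \<in> gen f {b}" using gen.base[of x "{b}" f] by simp
      then show ?thesis by simp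
    qed
  next
    case (mult u v)
    have ab: "{a, b} \<subseteq> S" using assms by auto
    have gs: "gen f {a, b} \<subseteq> S" by (rule gen_sub[OF ab])
    have s: "u \<in> S" "v \<in> S" using mult.hyps(1,2) gs by (simp_all add: subset_iff)
    have I: "ideal_of f S (J a)" using J_ideal[OF assms(1)] .
    show ?case
    proof (cases "u \<in> J a")
      case True then show ?thesis using ideal_r[OF I True s(2)] by simp
    next
      case False
      show ?thesis
      proof (cases "v \<in> J a")
        case True then show ?thesis using ideal_l[OF I True s(1)] by simp
      next
        case F2: False
        have "u \<in> gen f {b}" using mult.IH(1) False by simp
        moreover have "v \<in> gen f {b}" using mult.IH(2) F2 by simp
        ultimately have "f u v \<in> gen f {b}" by (rule gen.mult)
        then show ?thesis by simp
      qed
    qed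
  qed
qed

lemma lam1: "lam f x y z 1 = mul3 f x (z 1) y" using lam_Suc[of f x y z 0] by simp
lemma rho1: "rho f x y z 1 = mul3 f y (z 1) x" using rho_Suc[of f x y z 0] by simp

lemma cyc_J:
  assumes a: "a \<in> S" and b: "b \<in> S" and c: "cyc x y z p"
    and g: "x \<in> gen f {a, b}" "y \<in> gen f {a, b}"
    "\<forall>l. 1 \<le> l \<and> l \<le> p \<longrightarrow> z l \<in> one_adj (gen f {a, b})"
  shows "x \<in> J a"
proof (rule ccontr)
  assume nx: "x \<notin> J a"
  have I: "ideal_of f S (J a)" using J_ideal a .
  have cc: "x \<in> S" "y \<in> S" "\<forall>l. 1 \<le> l \<and> l \<le> p \<longrightarrow> z l \<in> one_adj S" "1 \<le> p"
    "lam f x y z p = x" "rho f x y z p = y" "x \<noteq> y" using c unfolding cyc_def by blast+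
  have ci: "x \<in> J a \<and> y \<in> J a" if "x \<in> J a \<or> y \<in> J a \<or> (\<exists>l. 1 \<le> l \<and> l \<le> p \<and> z l \<in> Some ` J a)"
    using cyc_ideal[OF c I] that by blast
  have ny: "y \<notin> J a" using ci nx by blast
  have nl: "z 1 \<notin> Some ` J a" using ci nx cc(4) by blast
  have sp: "gen f {a, b} \<subseteq> gen f {b} \<union> J a" using gen_split a b .
  have xb: "x \<in> gen f {b}" using g(1) sp nx by blast
  have yb: "y \<in> gen f {b}" using g(2) sp ny by blast
  have z1: "z 1 \<in> one_adj (gen f {b})"
  proof -
    have "z 1 \<in> one_adj (gen f {a, b})" using g(3) cc(4) by blast
    then show ?thesis using sp nl unfolding one_adj_def by blast
  qed
  have gS: "gen f {b} \<subseteq> S" using gen_sub b by simp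
  have "lam f x y z 1 = rho f x y z 1"
  proof (cases "z 1")
    case None
    have "f x y = f y x" by (rule gen1_comm[OF b xb yb])
    then show ?thesis unfolding lam1 rho1 using None by (simp add: mul3_def)
  next
    case (Some w)
    then have wb: "w \<in> gen f {b}" using z1 by (auto simp: one_adj_def)
    have s: "w \<in> S" "x \<in> S" "y \<in> S" using wb gS cc by auto
    have e1: "f x w = f w x" by (rule gen1_comm[OF b xb wb])
    have e2: "f x y = f y x" by (rule gen1_comm[OF b xb yb])
    have e3: "f y w = f w y" by (rule gen1_comm[OF b yb wb])
    have "f (f x w) y = f (f w x) y" by (simp only: e1)
    also have "\<dots> = f w (f x y)" using assoc s by simp
    also have "\<dots> = f w (f y x)" by (simp only: e2)
    also have "\<dots> = f (f w y) x" using assoc s by simp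
    also have "\<dots> = f (f y w) x" by (simp only: e3)
    finally show ?thesis unfolding lam1 rho1 using Some by (simp add: mul3_def)
  qed
  then have "lam f x y z p = rho f x y z p" using eq_prop'[of f x y z 1 p] cc(4) by simp
  then show False using cc by simp
qed

end

lemma mul3_agree:
  assumes "\<forall>u\<in>U. \<forall>v\<in>U. g1 u v \<in> U" "\<forall>u\<in>U. \<forall>v\<in>U. g1 u v = g2 u v"
    "u \<in> U" "v \<in> U" "z \<in> one_adj U"
  shows "mul3 g1 u z v = mul3 g2 u z v"
  using assms by (auto simp: mul3_def one_adj_def)

lemma lr_agree:
  assumes cl: "\<forall>u\<in>U. \<forall>v\<in>U. g1 u v \<in> U" and ag: "\<forall>u\<in>U. \<forall>v\<in>U. g1 u v = g2 u v"
    and xy: "x \<in> U" "y \<in> U"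
    and z: "\<forall>l. 1 \<le> l \<and> l \<le> n \<longrightarrow> z l \<in> one_adj U"
  shows "lam g1 x y z n = lam g2 x y z n \<and> rho g1 x y z n = rho g2 x y z n"
  using z
proof (induction n)
  case 0 then show ?case by simp
next
  case (Suc n)
  then have IH: "lam g1 x y z n = lam g2 x y z n \<and> rho g1 x y z n = rho g2 x y z n" by auto
  have inU: "lam g1 x y z n \<in> U \<and> rho g1 x y z n \<in> U"
    using lr_closed[OF cl xy, of n z] Suc.prems by auto
  have zU: "z (Suc n) \<in> one_adj U" using Suc.prems by auto
  show ?case using IH inU zU mul3_agree[OF cl ag]
    by (simp add: lam_Suc rho_Suc)
qed

lemma nil_transfer:
  assumes nil: "nilpotent_sg g2 V" and sub: "U \<subseteq> V"
    and cl: "\<forall>u\<in>U. \<forall>v\<in>U. g1 u v \<in> U" and ag: "\<forall>u\<in>U. \<forall>v\<in>U. g1 u v = g2 u v"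
  shows "nilpotent_sg g1 U"
proof -
  obtain n where n: "n \<ge> 1" and H: "\<forall>a\<in>V. \<forall>b\<in>V. \<forall>c.
      (\<forall>i\<in>{1..n}. c i \<in> one_adj V) \<longrightarrow> lam g2 a b c n = rho g2 a b c n"
    using nil unfolding nilpotent_sg_def by blast
  have oa: "one_adj U \<subseteq> one_adj V" using sub by (auto simp: one_adj_def)
  show ?thesis unfolding nilpotent_sg_def
  proof (intro exI[of _ n] conjI ballI allI impI)
    show "1 \<le> n" using n .
    fix a b c assume a: "a \<in> U" and b: "b \<in> U" and c: "\<forall>i\<in>{1..n}. c i \<in> one_adj U"
    have c': "\<forall>l. 1 \<le> l \<and> l \<le> n \<longrightarrow> c l \<in> one_adj U" using c by auto
    have "lam g2 a b c n = rho g2 a b c n" using H a b c sub oa by blast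
    then show "lam g1 a b c n = rho g1 a b c n" using lr_agree[OF cl ag a b c'] by simp
  qed
qed

lemma cycle_exists:
  assumes fin: "finite T" and cl: "\<forall>u\<in>T. \<forall>v\<in>T. f u v \<in> T" and nn: "\<not> nilpotent_sg f T"
  shows "\<exists>x y z p. x \<in> T \<and> y \<in> T \<and> (\<forall>l. 1 \<le> l \<and> l \<le> p \<longrightarrow> z l \<in> one_adj T) \<and> 1 \<le> p
     \<and> x \<noteq> y \<and> lam f x y z p = x \<and> rho f x y z p = y"
proof -
  define n where "n = card T * card T + 1"
  have n1: "n \<ge> 1" by (simp add: n_def)
  obtain a b c where ab: "a \<in> T" "b \<in> T" and c: "\<forall>i\<in>{1..n}. c i \<in> one_adj T"
    and ne: "lam f a b c n \<noteq> rho f a b c n"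
    using nn n1 unfolding nilpotent_sg_def by blast
  have c': "\<forall>l. 1 \<le> l \<and> l \<le> n \<longrightarrow> c l \<in> one_adj T" using c by auto
  define g where "g i = (lam f a b c i, rho f a b c i)" for i
  have gT: "g ` {0..n} \<subseteq> T \<times> T"
  proof
    fix q assume "q \<in> g ` {0..n}"
    then obtain i where i: "i \<le> n" "q = g i" by auto
    have "\<forall>l. 1 \<le> l \<and> l \<le> i \<longrightarrow> c l \<in> one_adj T" using c' i by auto
    then show "q \<in> T \<times> T" using lr_closed[OF cl ab, of i c] i by (simp add: g_def)
  qed
  have "\<not> inj_on g {0..n}"
  proof
    assume inj: "inj_on g {0..n}"
    have "card {0..n} = card (g ` {0..n})" using card_image[OF inj] by simp
    also have "\<dots> \<le> card (T \<times> T)" using gT fin by (intro card_mono) simp_all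
    also have "\<dots> = card T * card T" by (rule card_cartesian_product)
    finally show False by (simp add: n_def)
  qed
  then obtain i j where ij: "i \<in> {0..n}" "j \<in> {0..n}" "i \<noteq> j" "g i = g j"
    unfolding inj_on_def by blast
  obtain i j where ij: "i < j" "j \<le> n" "g i = g j"
  proof (cases "i < j")
    case True then show ?thesis using that ij by auto
  next
    case False then show ?thesis using that[of j i] ij by auto
  qed
  define x where "x = lam f a b c i"
  define y where "y = rho f a b c i"
  define z where "z l = c (i + l)" for l
  define p where "p = j - i"
  have xy: "x \<noteq> y"
  proof
    assume "x = y"
    then have "lam f a b c n = rho f a b c n" using eq_prop'[of f a b c i n] ij
      by (simp add: x_def y_def)
    then show False using ne by simp
  qed
  have sh: "lam f a b c (i + p) = lam f x y z p \<and> rho f a b c (i + p) = rho f x y z p"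
    using lr_shift[of f a b c i p] by (simp add: x_def y_def z_def[abs_def])
  have ip: "i + p = j" using ij by (simp add: p_def)
  have li: "\<forall>l. 1 \<le> l \<and> l \<le> i \<longrightarrow> c l \<in> one_adj T" using c' ij by auto
  have xyT: "x \<in> T" "y \<in> T" using lr_closed[OF cl ab li] by (simp_all add: x_def y_def)
  have zT: "\<forall>l. 1 \<le> l \<and> l \<le> p \<longrightarrow> z l \<in> one_adj T" using c' ij by (auto simp: z_def p_def)
  have "lam f x y z p = x" "rho f x y z p = y" using sh ip ij(3)
    by (auto simp: g_def x_def y_def)
  moreover have "1 \<le> p" using ij by (simp add: p_def)
  ultimately show ?thesis using xyT zT xy by blast
qed

locale ps = sgp +
  fixes Ser :: "nat \<Rightarrow> 'a set" and m :: nat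
  assumes fin: "finite S" and pn: "pseudo_nilpotent f S" and pser: "principal_series f S Ser m"
begin

lemma m1: "1 \<le> m" using pser by (simp add: principal_series_def)
lemma Ser1: "Ser 1 = S" using pser by (simp add: principal_series_def)
lemma Serm: "Ser (m + 1) = {}" using pser by (simp add: principal_series_def)

lemma Ser_ideal: "1 \<le> i \<Longrightarrow> i \<le> m + 1 \<Longrightarrow> ideal_of f S (Ser i)"
  using pser by (simp add: principal_series_def)

lemma Ser_step: "1 \<le> i \<Longrightarrow> i \<le> m \<Longrightarrow> Ser (i + 1) \<subset> Ser i"
  using pser by (simp add: principal_series_def)

lemma Ser_nomid: "1 \<le> i \<Longrightarrow> i \<le> m \<Longrightarrow> ideal_of f S J' \<Longrightarrow> Ser (i + 1) \<subset> J' \<Longrightarrow> J' \<subset> Ser i \<Longrightarrow> False"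
  using pser unfolding principal_series_def by auto

lemma Ser_mono: assumes "1 \<le> i" "i \<le> j" "j \<le> m + 1" shows "Ser j \<subseteq> Ser i"
proof -
  have "\<forall>j. i \<le> j \<longrightarrow> j \<le> m + 1 \<longrightarrow> Ser j \<subseteq> Ser i" if "1 \<le> i" for i
  proof (intro allI)
    fix j show "i \<le> j \<longrightarrow> j \<le> m + 1 \<longrightarrow> Ser j \<subseteq> Ser i"
    proof (induction j)
      case 0 then show ?case using that by simp
    next
      case (Suc j)
      show ?case
      proof (intro impI)
        assume h: "i \<le> Suc j" "Suc j \<le> m + 1"
        show "Ser (Suc j) \<subseteq> Ser i"
        proof (cases "i = Suc j")
          case True then show ?thesis by simp
        next
          case False
          then have "i \<le> j" using h by simp
          then have "Ser j \<subseteq> Ser i" using Suc h by simp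
          moreover have "Ser (j + 1) \<subseteq> Ser j" using Ser_step[of j] h that \<open>i \<le> j\<close> by auto
          ultimately show ?thesis by simp
        qed
      qed
    qed
  qed
  then show ?thesis using assms by blast
qed

lemma depth: assumes x: "x \<in> S" shows "\<exists>k. 1 \<le> k \<and> k \<le> m \<and> x \<in> Ser k \<and> x \<notin> Ser (k + 1)"
proof -
  define j where "j = (LEAST j. 1 \<le> j \<and> x \<notin> Ser j)"
  have ex: "1 \<le> m + 1 \<and> x \<notin> Ser (m + 1)" using Serm by simp
  have j: "1 \<le> j" "x \<notin> Ser j" using LeastI[of "\<lambda>j. 1 \<le> j \<and> x \<notin> Ser j", OF ex] by (simp_all add: j_def)
  have jle: "j \<le> m + 1" using Least_le[of "\<lambda>j. 1 \<le> j \<and> x \<notin> Ser j", OF ex] by (simp add: j_def)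
  have j2: "j \<noteq> 1" using j x Ser1 by auto
  have "x \<in> Ser (j - 1)"
  proof (rule ccontr)
    assume "x \<notin> Ser (j - 1)"
    then have "j \<le> j - 1" using not_less_Least[of "j - 1" "\<lambda>j. 1 \<le> j \<and> x \<notin> Ser j"] j j2
      by (force simp: j_def)
    then show False using j j2 by simp
  qed
  then show ?thesis using j j2 jle by (intro exI[of _ "j - 1"]) auto
qed

lemma union_ideal: "ideal_of f S I1 \<Longrightarrow> ideal_of f S I2 \<Longrightarrow> ideal_of f S (I1 \<union> I2)"
  by (auto simp: ideal_of_def)

lemma same_factor:
  assumes k: "1 \<le> k" "k \<le> m" and x: "x \<in> Ser k" "x \<notin> Ser (k + 1)" and c: "c \<in> Ser k" "c \<notin> Ser (k + 1)"
  shows "c \<in> J x"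
proof -
  have Ik: "ideal_of f S (Ser k)" and Ik1: "ideal_of f S (Ser (k + 1))" using Ser_ideal k by auto
  have xS: "x \<in> S" using x ideal_sub[OF Ik] by auto
  let ?I = "J x \<union> Ser (k + 1)"
  have I: "ideal_of f S ?I" using union_ideal[OF J_ideal[OF xS] Ik1] .
  have "J x \<subseteq> Ser k" using J_min[OF Ik x(1)] .
  moreover have "Ser (k + 1) \<subseteq> Ser k" using Ser_step k by auto
  ultimately have sub: "?I \<subseteq> Ser k" by auto
  have ps: "Ser (k + 1) \<subset> ?I" using x J_self by auto
  have "\<not> ?I \<subset> Ser k" using Ser_nomid[OF k I ps] by blast
  then have "?I = Ser k" using sub by blast
  then show ?thesis using c by auto
qed

lemma cyc_y:
  assumes c: "cyc x y z p" and k: "1 \<le> k" "k \<le> m" and x: "x \<in> Ser k" "x \<notin> Ser (k + 1)"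
  shows "y \<in> Ser k" "y \<notin> Ser (k + 1)"
proof -
  have Ik: "ideal_of f S (Ser k)" and Ik1: "ideal_of f S (Ser (k + 1))" using Ser_ideal k by auto
  obtain u where u: "u \<in> Ser k" "y = f y u" using cyc_rep[OF cyc_swap[OF c] Ik x(1)] by blast
  have yS: "y \<in> S" using c by (simp add: cyc_def)
  show "y \<in> Ser k" using u ideal_l[OF Ik u(1) yS] by simp
  show "y \<notin> Ser (k + 1)" using cyc_ideal[OF c Ik1] x by blast
qed

lemma cyc_inv:
  assumes c: "cyc x y z p" and k: "1 \<le> k" "k \<le> m" and x: "x \<in> Ser k" "x \<notin> Ser (k + 1)"
    and a: "a \<in> S" and xa: "x \<in> J a"
  shows "\<exists>q\<in>Ser k. f a q \<notin> Ser (k + 1)"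
proof -
  have Ik: "ideal_of f S (Ser k)" and Ik1: "ideal_of f S (Ser (k + 1))" using Ser_ideal k by auto
  have SkS: "Ser k \<subseteq> S" using ideal_sub[OF Ik] .
  obtain u where u: "u \<in> Ser k" "x = f x u" using cyc_rep[OF c Ik cyc_y(1)[OF c k x]] by blast
  have uS: "u \<in> S" using u SkS by auto
  show ?thesis
  proof (rule J_cases[OF xa])
    assume xa: "x = a"
    then have "f a u \<notin> Ser (k + 1)" using u x by metis
    then show ?thesis using u by blast
  next
    fix s assume s: "s \<in> S" "x = f s a"
    have "x = f s (f a u)" using u s assoc a uS by simp
    then have "f a u \<notin> Ser (k + 1)" using x ideal_l[OF Ik1 _ s(1)] by metis
    then show ?thesis using u by blast
  next
    fix s assume s: "s \<in> S" "x = f a s"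
    have "x = f a (f s u)" using u s assoc a uS by simp
    moreover have "f s u \<in> Ser k" using ideal_l[OF Ik u(1) s(1)] .
    ultimately show ?thesis using x by metis
  next
    fix s t assume s: "s \<in> S" "t \<in> S" "x = f (f s a) t"
    have "x = f s (f a (f t u))" using u s assoc a uS cl by simp
    then have "f a (f t u) \<notin> Ser (k + 1)" using x ideal_l[OF Ik1 _ s(1)] by metis
    moreover have "f t u \<in> Ser k" using ideal_l[OF Ik u(1) s(2)] .
    ultimately show ?thesis by blast
  qed
qed

lemma inv_stem:
  assumes k: "1 \<le> k" "k \<le> m" and a: "a \<in> S" and q: "q \<in> Ser k" "f a q \<notin> Ser (k + 1)"
  shows "a \<in> stem_set f S Ser k"
proof -
  have Ik: "ideal_of f S (Ser k)" and Ik1: "ideal_of f S (Ser (k + 1))" using Ser_ideal k by auto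
  have qS: "q \<in> S" using q ideal_sub[OF Ik] by auto
  have q1: "q \<notin> Ser (k + 1)" using q ideal_l[OF Ik1 _ a] by metis
  show ?thesis
  proof (cases "a \<in> Ser k")
    case True
    have "a \<notin> Ser (k + 1)" using q ideal_r[OF Ik1 _ qS] by metis
    then show ?thesis using True by (simp add: stem_set_def)
  next
    case False
    then have "a \<in> F_set f S Ser k" using a q q1 by (auto simp: F_set_def)
    then show ?thesis by (simp add: stem_set_def)
  qed
qed

end

context ps
begin

lemma cyc_factor_nonnil:
  assumes c: "cyc x y z p" and k: "1 \<le> k" "k \<le> m" and x: "x \<in> Ser k" "x \<notin> Ser (k + 1)"
  shows "\<not> nilpotent_sg (rees_mult f (Ser (k + 1))) (rees_carrier (Ser k) (Ser (k + 1)))"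
proof
  assume nil: "nilpotent_sg (rees_mult f (Ser (k + 1))) (rees_carrier (Ser k) (Ser (k + 1)))"
  have Ik: "ideal_of f S (Ser k)" and Ik1: "ideal_of f S (Ser (k + 1))" using Ser_ideal k by auto
  have cc: "x \<in> S" "y \<in> S" "\<forall>l. 1 \<le> l \<and> l \<le> p \<longrightarrow> z l \<in> one_adj S" "1 \<le> p"
    "lam f x y z p = x" "rho f x y z p = y" "x \<noteq> y" using c unfolding cyc_def by blast+
  have y: "y \<in> Ser k" "y \<notin> Ser (k + 1)" using cyc_y[OF c k x] by auto
  define G where "G = {x, y} \<union> {s. \<exists>i\<in>{1..p}. z i = Some s}"
  define T where "T = gen f G"
  define I where "I = T \<inter> Ser (k + 1)"
  have GS: "G \<subseteq> S"
  proof
    fix s assume "s \<in> G"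
    then consider "s = x" | "s = y" | i where "i \<in> {1..p}" "z i = Some s" by (auto simp: G_def)
    then show "s \<in> S"
    proof cases
      case 3 then have "z i \<in> one_adj S" using cc(3) by auto
      then show ?thesis using 3 by (auto simp: one_adj_def)
    qed (use cc in auto)
  qed
  have TS: "T \<subseteq> S" unfolding T_def by (rule gen_sub[OF GS])
  have xT: "x \<in> T" and yT: "y \<in> T" unfolding T_def G_def by (auto intro: gen.base)
  have TI: "ideal_of f T I" unfolding ideal_of_def
  proof (intro conjI ballI)
    show "I \<subseteq> T" by (simp add: I_def)
    fix u t assume u: "u \<in> I" and t: "t \<in> T"
    have uT: "u \<in> T" "u \<in> Ser (k + 1)" using u by (auto simp: I_def)
    have tS: "t \<in> S" using t TS by auto
    have "f u t \<in> T" "f t u \<in> T" unfolding T_def using uT t by (auto simp: T_def intro: gen.mult)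
    moreover have "f u t \<in> Ser (k + 1)" "f t u \<in> Ser (k + 1)"
      using ideal_r[OF Ik1 uT(2) tS] ideal_l[OF Ik1 uT(2) tS] by auto
    ultimately show "f u t \<in> I" "f t u \<in> I" by (auto simp: I_def)
  qed
  have zz: "\<forall>i\<in>{1..p}. z i \<in> one_adj S" using cc(3) by auto
  have xI: "x \<notin> I" and yI: "y \<notin> I" using x y by (auto simp: I_def)
  have PN: "nn_edge (rees_mult f I) (rees_carrier T I)
                 (rees_img I (lam f x y z 0)) (rees_img I (rho f x y z 0))"
    using pn[unfolded pseudo_nilpotent_def, rule_format, of x y p z T I 0 0]
      cc zz TI xI yI by (simp add: T_def G_def)
  then have NN: "\<not> nilpotent_sg (rees_mult f I) (gen (rees_mult f I) {Some x, Some y})"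
    using xI yI by (simp add: nn_edge_def rees_img_def)
  define W where "W = rees_img I ` (T \<inter> Ser k)"
  define g1 where "g1 = rees_mult f I"
  define g2 where "g2 = rees_mult f (Ser (k + 1))"
  have ri: "rees_img I s = rees_img (Ser (k + 1)) s" if "s \<in> T" for s
    using that by (simp add: rees_img_def I_def)
  have agW: "g1 u v = g2 u v \<and> g1 u v \<in> W" if u: "u \<in> W" and v: "v \<in> W" for u v
  proof -
    obtain s1 where s1: "s1 \<in> T" "s1 \<in> Ser k" "u = rees_img I s1" using u by (auto simp: W_def)
    obtain s2 where s2: "s2 \<in> T" "s2 \<in> Ser k" "v = rees_img I s2" using v by (auto simp: W_def)
    show ?thesis
    proof (cases "s1 \<in> I")
      case True
      then have "u = None" "rees_img I s1 = None" using s1 by (simp_all add: rees_img_def)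
      moreover have "None \<in> W" using s1 True by (force simp: W_def rees_img_def)
      ultimately show ?thesis by (simp add: g1_def g2_def)
    next
      case F1: False
      show ?thesis
      proof (cases "s2 \<in> I")
        case True
        then have "v = None" "rees_img I s2 = None" using s2 by (simp_all add: rees_img_def)
        moreover have "None \<in> W" using s2 True by (force simp: W_def rees_img_def)
        moreover have "u = Some s1" using s1 F1 by (simp add: rees_img_def)
        ultimately show ?thesis by (simp add: g1_def g2_def)
      next
        case False
        have us: "u = Some s1" "v = Some s2" using s1 s2 F1 False by (simp_all add: rees_img_def)
        have pT: "f s1 s2 \<in> T" using s1 s2 by (simp add: T_def gen.mult)
        have s1S: "s1 \<in> S" using s1 TS by auto
        have pk: "f s1 s2 \<in> Ser k" using ideal_l[OF Ik s2(2) s1S] .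
        have "g1 u v = rees_img I (f s1 s2)" using us by (simp add: g1_def)
        moreover have "g2 u v = rees_img (Ser (k + 1)) (f s1 s2)" using us by (simp add: g2_def)
        moreover have "rees_img I (f s1 s2) \<in> W" using pT pk by (simp add: W_def)
        ultimately show ?thesis using ri[OF pT] by simp
      qed
    qed
  qed
  define U where "U = gen g1 {Some x, Some y}"
  have UW: "U \<subseteq> W"
  proof
    fix u assume "u \<in> U" then show "u \<in> W" unfolding U_def
    proof (induction rule: gen.induct)
      case (base u)
      then have "u = rees_img I x \<or> u = rees_img I y" using xI yI by (auto simp: rees_img_def)
      then show ?case using xT yT x y by (auto simp: W_def)
    next
      case (mult u v) then show ?case using agW by blast
    qed
  qed
  have WV: "W \<subseteq> rees_carrier (Ser k) (Ser (k + 1))"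
    using ri by (auto simp: W_def rees_carrier_def)
  have clU: "\<forall>u\<in>U. \<forall>v\<in>U. g1 u v \<in> U" unfolding U_def by (auto intro: gen.mult)
  have agU: "\<forall>u\<in>U. \<forall>v\<in>U. g1 u v = g2 u v" using agW UW by blast
  have "nilpotent_sg g1 U"
    by (rule nil_transfer[OF nil[folded g2_def]]) (use UW WV clU agU in auto)
  then show False using NN by (simp add: U_def g1_def)
qed

lemma cyc_from_nonnil:
  assumes c: "c \<in> S" and d: "d \<in> S" and nn: "\<not> nilpotent_sg f (gen f {c, d})"
  shows "\<exists>x y z p. cyc x y z p \<and> x \<in> J c \<and> x \<in> J d"
proof -
  let ?T = "gen f {c, d}"
  have cdS: "{c, d} \<subseteq> S" using c d by simp
  have TS: "?T \<subseteq> S" by (rule gen_sub[OF cdS])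
  have finT: "finite ?T" using finite_subset[OF TS fin] .
  have clT: "\<forall>u\<in>?T. \<forall>v\<in>?T. f u v \<in> ?T" by (auto intro: gen.mult)
  obtain x y z p where h: "x \<in> ?T" "y \<in> ?T" "\<forall>l. 1 \<le> l \<and> l \<le> p \<longrightarrow> z l \<in> one_adj ?T" "1 \<le> p"
     "x \<noteq> y" "lam f x y z p = x" "rho f x y z p = y"
    using cycle_exists[OF finT clT nn] by blast
  have oa: "one_adj ?T \<subseteq> one_adj S" using TS by (auto simp: one_adj_def)
  have cy: "cyc x y z p" unfolding cyc_def
  proof (intro conjI allI impI)
    show "x \<in> S" "y \<in> S" using h TS by auto
    show "1 \<le> p" "x \<noteq> y" "lam f x y z p = x" "rho f x y z p = y" using h by auto
    fix l assume "1 \<le> l \<and> l \<le> p" then show "z l \<in> one_adj S" using h(3) oa by blast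
  qed
  have xc: "x \<in> J c" using cyc_J[OF c d cy h(1,2,3)] .
  have e: "gen f {d, c} = ?T" by (simp add: insert_commute)
  have xd: "x \<in> J d" using cyc_J[OF d c cy] h(1,2,3) unfolding e by blast
  show ?thesis using cy xc xd by blast
qed

lemma main:
  assumes a: "a \<in> S" and b: "b \<in> S" and e: "nn_edge f S a b"
  shows "\<exists>i\<in>{1..m}. is_root f Ser i \<and> a \<in> stem_set f S Ser i \<and> b \<in> stem_set f S Ser i"
proof -
  define K where "K = {k. 1 \<le> k \<and> k \<le> m \<and> (\<exists>x y z p. cyc x y z p \<and> x \<in> Ser k \<and> x \<notin> Ser (k + 1)
     \<and> x \<in> J a \<and> x \<in> J b)}"
  have finK: "finite K" by (rule finite_subset[of K "{..m}"]) (auto simp: K_def)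
  have nn: "\<not> nilpotent_sg f (gen f {a, b})" using e by (simp add: nn_edge_def)
  obtain x y z p where c0: "cyc x y z p" "x \<in> J a" "x \<in> J b" using cyc_from_nonnil[OF a b nn] by blast
  have xS: "x \<in> S" using c0 by (simp add: cyc_def)
  obtain k where k: "1 \<le> k" "k \<le> m" "x \<in> Ser k" "x \<notin> Ser (k + 1)" using depth[OF xS] by blast
  have "k \<in> K" unfolding K_def using k c0 by blast
  then have Kne: "K \<noteq> {}" by blast
  define k0 where "k0 = Max K"
  have k0K: "k0 \<in> K" using Max_in[OF finK Kne] by (simp add: k0_def)
  have k0max: "k' \<le> k0" if "k' \<in> K" for k' using Max_ge[OF finK that] by (simp add: k0_def)
  obtain x0 y0 z0 p0 where w: "1 \<le> k0" "k0 \<le> m" "cyc x0 y0 z0 p0" "x0 \<in> Ser k0" "x0 \<notin> Ser (k0 + 1)"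
    "x0 \<in> J a" "x0 \<in> J b" using k0K unfolding K_def by blast
  have Ik0: "ideal_of f S (Ser k0)" and Ik1: "ideal_of f S (Ser (k0 + 1))" using Ser_ideal w by auto
  have root1: "\<not> nilpotent_sg (rees_mult f (Ser (k0 + 1))) (rees_carrier (Ser k0) (Ser (k0 + 1)))"
    using cyc_factor_nonnil[OF w(3,1,2,4,5)] .
  have root2: "nilpotent_sg f (gen f {c, d})" if c: "c \<in> Ser k0 - Ser (k0 + 1)" and d: "d \<in> Ser (k0 + 1)" for c d
  proof (rule ccontr)
    assume nc: "\<not> nilpotent_sg f (gen f {c, d})"
    have cS: "c \<in> S" using c ideal_sub[OF Ik0] by auto
    have dS: "d \<in> S" using d ideal_sub[OF Ik1] by auto
    obtain x2 y2 z2 p2 where c2: "cyc x2 y2 z2 p2" "x2 \<in> J c" "x2 \<in> J d"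
      using cyc_from_nonnil[OF cS dS nc] by blast
    have x2S: "x2 \<in> S" using c2 by (simp add: cyc_def)
    have x2d: "x2 \<in> Ser (k0 + 1)" using J_min[OF Ik1 d] c2(3) by blast
    have cx0: "c \<in> J x0" using same_factor[OF w(1,2,4,5)] c by auto
    have x0S: "x0 \<in> S" using w ideal_sub[OF Ik0] by auto
    have Ja: "ideal_of f S (J a)" "ideal_of f S (J b)" using J_ideal a b by auto
    have "J x0 \<subseteq> J a" by (rule J_min[OF Ja(1) w(6)])
    moreover have "J x0 \<subseteq> J b" by (rule J_min[OF Ja(2) w(7)])
    ultimately have ca: "c \<in> J a" "c \<in> J b" using cx0 by auto
    have "J c \<subseteq> J a" by (rule J_min[OF Ja(1) ca(1)])
    moreover have "J c \<subseteq> J b" by (rule J_min[OF Ja(2) ca(2)])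
    ultimately have x2ab: "x2 \<in> J a" "x2 \<in> J b" using c2(2) by blast+
    obtain k2 where k2: "1 \<le> k2" "k2 \<le> m" "x2 \<in> Ser k2" "x2 \<notin> Ser (k2 + 1)" using depth[OF x2S] by blast
    have "k2 \<in> K" unfolding K_def using k2 c2(1) x2ab by blast
    then have "k2 \<le> k0" by (rule k0max)
    then have "Ser (k0 + 1) \<subseteq> Ser (k2 + 1)" using Ser_mono[of "k2 + 1" "k0 + 1"] w by simp
    then show False using x2d k2 by auto
  qed
  have root: "is_root f Ser k0" unfolding is_root_def using root1 root2 by blast
  obtain qa where qa: "qa \<in> Ser k0" "f a qa \<notin> Ser (k0 + 1)" using cyc_inv[OF w(3,1,2,4,5) a w(6)] by blast
  obtain qb where qb: "qb \<in> Ser k0" "f b qb \<notin> Ser (k0 + 1)" using cyc_inv[OF w(3,1,2,4,5) b w(7)] by blast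
  have "a \<in> stem_set f S Ser k0" using inv_stem[OF w(1,2) a qa] .
  moreover have "b \<in> stem_set f S Ser k0" using inv_stem[OF w(1,2) b qb] .
  ultimately show ?thesis using root w(1,2) by auto
qed

end

theorem corollary3p9:
  fixes f :: "'a \<Rightarrow> 'a \<Rightarrow> 'a" and S :: "'a set" and Ser :: "nat \<Rightarrow> 'a set"
    and m :: nat and a b :: 'a
  assumes "semigroup_on S f" and "finite S" and "pseudo_nilpotent f S"
    and "principal_series f S Ser m"
    and "a \<in> S" and "b \<in> S"
    and "nn_edge f S a b"
  shows "\<exists>i\<in>{1..m}. is_root f Ser i \<and> a \<in> stem_set f S Ser i \<and> b \<in> stem_set f S Ser i"
proof -
  interpret ps S f Ser m using assms(1-4) by (simp add: ps_def ps_axioms_def sgp_def)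
  show ?thesis by (rule main[OF assms(5-7)])
qed
end
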